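(* Let $\alpha\in[0,1)$ and let $$X(\sqrt{t},\alpha)=\{\sqrt{n}\,e^{2\pi i n\alpha}\ :\ n\in\mathbb{N}\}\subset\mathbb{C}.$$ (a) If $\alpha$ is badly approximable and its partial quotients are all bounded by the positive integer $B$, then $X(\sqrt{t},\alpha)$ is $6\sqrt{B}$-relatively dense. (b) If $X(\sqrt{t},\alpha)$ is $r$-relatively dense, then $\alpha$ is badly approximable and all its partial quotients are bounded by $B=\lfloor 96r^2\rfloor$. (c) If $\alpha$ is badly approximable with constant $C$, then $X(\sqrt{t},\alpha)$ is $\sqrt{C}/2$-uniformly discrete. (d) If $X(\sqrt{t},\alpha)$ is $s$-uniformly discrete, then $\alpha$ is badly approximable with constant $C=s^2/53$.
   Context: $\mathbb{C}$ is identified with $\mathbb{R}^2$, and $B(x,r)$ denotes the open disk of radius $r$ centered at $x$. A set $X\subset\mathbb{C}$ is $r$-relatively dense ($r>0$) if $B(x,r)\cap X\ne\emptyset$ for every $x\in\mathbb{C}$. It is $s$-uniformly discrete ($s>0$) if $\mathrm{Card}(B(x,s)\cap X)\le1$ for every $x\in\mathbb{C}$. A real number $\alpha$ is badly approximable with constant $C>0$ if $q|q\alpha-p|\ge C$ for all $(p,q)\in\mathbb{Z}\times\mathbb{N}$. Equivalently, the partial quotients $a_1,a_2,\dots$ of its continued fraction expansion $\alpha=[0;a_1,a_2,\dots]$ are bounded by some positive integer $B$. *)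

theory Defs
  imports "HOL-Analysis.Analysis"
begin

definition Xsqrt :: "real \<Rightarrow> complex set" where
  "Xsqrt \<alpha> = {complex_of_real (sqrt (real n)) * exp (2 * of_real pi * \<i> * of_real (real n * \<alpha>)) | n::nat. n \<ge> 1}"

definition rel_dense :: "real \<Rightarrow> complex set \<Rightarrow> bool" where
  "rel_dense r X \<longleftrightarrow> (\<forall>x. ball x r \<inter> X \<noteq> {})"

definition unif_discrete :: "real \<Rightarrow> complex set \<Rightarrow> bool" where
  "unif_discrete s X \<longleftrightarrow> (\<forall>x. finite (ball x s \<inter> X) \<and> card (ball x s \<inter> X) \<le> 1)"

definition badly_approx_const :: "real \<Rightarrow> real \<Rightarrow> bool" where
  "badly_approx_const \<alpha> C \<longleftrightarrow> (\<forall>(p::int) (q::nat). q \<ge> 1 \<longrightarrow> real q * \<bar>real q * \<alpha> - real_of_int p\<bar> \<ge> C)"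

definition badly_approx :: "real \<Rightarrow> bool" where
  "badly_approx \<alpha> \<longleftrightarrow> (\<exists>C>0. badly_approx_const \<alpha> C)"

text \<open>Continued fraction algorithm (Gauss map) for alpha in [0,1): remainders x_0 = alpha,
  x_k = frac(1/x_(k-1)) (and the expansion stops once a remainder is 0).
  The k-th partial quotient (k >= 1) exists iff x_(k-1) \<noteq> 0 and equals floor(1/x_(k-1)).\<close>
definition cf_rem :: "real \<Rightarrow> nat \<Rightarrow> real" where
  "cf_rem \<alpha> k = ((\<lambda>x. if x = 0 then 0 else frac (1 / x)) ^^ k) \<alpha>"

definition cf_quot :: "real \<Rightarrow> nat \<Rightarrow> int" where
  "cf_quot \<alpha> k = \<lfloor>1 / cf_rem \<alpha> (k - 1)\<rfloor>"

definition pq_bounded :: "real \<Rightarrow> nat \<Rightarrow> bool" where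
  "pq_bounded \<alpha> B \<longleftrightarrow> (\<forall>k\<ge>1. cf_rem \<alpha> (k - 1) \<noteq> 0 \<longrightarrow> cf_quot \<alpha> k \<le> int B)"

end

theory Submission
  imports Defs
begin

definition ee :: "real \<Rightarrow> complex" where "ee t = cis (2*pi*t)"

lemma exp_ee: "exp (2 * of_real pi * \<i> * of_real s) = ee s"
  by (simp add: ee_def cis_conv_exp mult_ac)

lemma norm_ee [simp]: "norm (ee t) = 1"
  by (simp add: ee_def)

lemma ee_add: "ee (a + b) = ee a * ee b"
  by (simp add: ee_def cis_mult distrib_left)

lemma ee_int: "ee (of_int k) = 1"
  unfolding ee_def by (rule cis_multiple_2pi) simp

lemma ee_minus1: "cmod (ee t - 1) = 2 * \<bar>sin (pi*t)\<bar>"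
proof -
  have "(cmod (ee t - 1))^2 = (cos (2*pi*t) - 1)^2 + (sin (2*pi*t))^2"
    by (simp add: ee_def cmod_power2)
  also have "\<dots> = 2 - 2 * cos (2*(pi*t))"
    using sin_cos_squared_add[of "2*pi*t"] by (simp add: power2_eq_square algebra_simps)
  also have "\<dots> = (2 * \<bar>sin (pi*t)\<bar>)^2"
    by (simp add: cos_double_sin power2_eq_square)
  finally show ?thesis
    by (metis abs_of_nonneg norm_ge_zero power2_eq_imp_eq abs_ge_zero mult_nonneg_nonneg zero_le_numeral)
qed

lemma ee_upper: "cmod (ee t - 1) \<le> 2*pi*\<bar>t\<bar>"
  using abs_sin_x_le_abs_x[of "pi*t"] by (simp add: ee_minus1 abs_mult)

lemma sin_lower: assumes "0 \<le> x" "x \<le> pi/2" shows "x/3 \<le> sin x"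
proof -
  have 1: "\<bar>sin x - (\<Sum>m<3. sin_coeff m * x ^ m)\<bar> \<le> inverse (fact 3) * \<bar>x\<bar> ^ 3"
    by (rule Maclaurin_sin_bound)
  have 2: "(\<Sum>m<3. sin_coeff m * x ^ m) = x"
    by (simp add: numeral_3_eq_3 sin_coeff_def)
  have f: "(fact 3::real) = 6" by (simp add: numeral_3_eq_3)
  have 3: "inverse (fact 3) * \<bar>x\<bar> ^ 3 = x^3/6"
    using assms unfolding f by (simp add: field_simps)
  have h: "\<bar>sin x - x\<bar> \<le> x^3/6" using 1 unfolding 2 3 .
  have x2: "x \<le> 2" using assms pi_less_4 by linarith
  have "x^3 = x*x*x" by (simp add: power3_eq_cube)
  also have "\<dots> \<le> 2*2*x" using x2 assms(1) by (intro mult_right_mono mult_mono) auto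
  finally have "x^3 \<le> 4 * x" by simp
  with h show ?thesis by linarith
qed

lemma ee_lower: assumes "\<bar>t\<bar> \<le> 1/2" shows "2*\<bar>t\<bar> \<le> cmod (ee t - 1)"
proof -
  have "pi*\<bar>t\<bar>/3 \<le> sin (pi*\<bar>t\<bar>)" using assms by (intro sin_lower) auto
  moreover have "0 \<le> sin (pi*\<bar>t\<bar>)" using assms by (intro sin_ge_zero) auto
  moreover have "sin (pi*\<bar>t\<bar>) = sin (pi*t) \<or> sin (pi*\<bar>t\<bar>) = - sin (pi*t)"
    by (cases "t \<ge> 0") (simp_all add: abs_of_nonneg abs_of_neg)
  ultimately have "pi*\<bar>t\<bar>/3 \<le> \<bar>sin (pi*t)\<bar>" by linarith
  moreover have "3*\<bar>t\<bar> \<le> pi*\<bar>t\<bar>" using pi_gt3 by (intro mult_right_mono) auto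
  ultimately show ?thesis by (simp add: ee_minus1)
qed

lemma ee_diff: "cmod (ee a - ee b) = cmod (ee (a - b) - 1)"
proof -
  have "ee a - ee b = ee b * (ee (a - b) - 1)"
    using ee_add[of b "a-b"] by (simp add: algebra_simps)
  thus ?thesis by (simp add: norm_mult)
qed

lemma dist_ident:
  assumes "cmod u = 1" "cmod v = 1"
  shows "(cmod (of_real \<rho> * u - of_real R * v))^2 = (R - \<rho>)^2 + \<rho>*R*(cmod(u - v))^2"
proof -
  have u: "(Re u)^2 + (Im u)^2 = 1" using assms(1) by (simp add: cmod_def)
  have v: "(Re v)^2 + (Im v)^2 = 1" using assms(2) by (simp add: cmod_def)
  have a: "(cmod (of_real \<rho> * u - of_real R * v))^2 = (\<rho>*Re u - R*Re v)^2 + (\<rho>*Im u - R*Im v)^2"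
    by (simp add: cmod_power2)
  have b: "(cmod(u - v))^2 = (Re u - Re v)^2 + (Im u - Im v)^2"
    by (simp add: cmod_power2)
  have "(\<rho>*Re u - R*Re v)^2 + (\<rho>*Im u - R*Im v)^2 = \<rho>^2*((Re u)^2 + (Im u)^2) + R^2*((Re v)^2 + (Im v)^2) - 2*\<rho>*R*(Re u*Re v + Im u*Im v)"
    by (simp add: power2_eq_square algebra_simps)
  moreover have "(Re u - Re v)^2 + (Im u - Im v)^2 = ((Re u)^2 + (Im u)^2) + ((Re v)^2 + (Im v)^2) - 2*(Re u*Re v + Im u*Im v)"
    by (simp add: power2_eq_square algebra_simps)
  ultimately show ?thesis unfolding a b u v by (simp add: power2_eq_square algebra_simps)
qed

lemma dist_lower:
  assumes "cmod u = 1" "cmod v = 1" "0 \<le> \<rho>" "0 \<le> R"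
  shows "min \<rho> R * cmod(u - v) \<le> cmod (of_real \<rho> * u - of_real R * v)"
proof -
  have m: "min \<rho> R * min \<rho> R \<le> \<rho>*R" using assms by (intro mult_mono) auto
  have "(min \<rho> R * cmod(u - v))^2 = (min \<rho> R * min \<rho> R) * (cmod(u-v))^2" by (simp add: power2_eq_square)
  also have "\<dots> \<le> \<rho>*R*(cmod(u - v))^2"
    using m by (intro mult_right_mono) auto
  also have "\<dots> \<le> (cmod (of_real \<rho> * u - of_real R * v))^2" using dist_ident[OF assms(1,2), of \<rho> R] assms by simp
  finally show ?thesis by (rule power2_le_imp_le) simp
qed

lemma cf_rem_0 [simp]: "cf_rem \<alpha> 0 = \<alpha>"
  by (simp add: cf_rem_def)

lemma cf_rem_Suc: "cf_rem \<alpha> (Suc k) = (if cf_rem \<alpha> k = 0 then 0 else frac (1 / cf_rem \<alpha> k))"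
  by (simp add: cf_rem_def)

lemma cf_quot_Suc: "cf_quot \<alpha> (Suc k) = \<lfloor>1 / cf_rem \<alpha> k\<rfloor>"
  by (simp add: cf_quot_def)

lemma cf_rem_range:
  assumes "0 \<le> \<alpha>" "\<alpha> < 1" shows "0 \<le> cf_rem \<alpha> k \<and> cf_rem \<alpha> k < 1"
  using assms by (induction k) (auto simp: cf_rem_Suc frac_lt_1)

lemma cf_rem_zero_mono:
  assumes "cf_rem \<alpha> i = 0" "i \<le> j" shows "cf_rem \<alpha> j = 0"
  using assms(2)
proof (induction j)
  case 0 thus ?case using assms(1) by simp
next
  case (Suc j)
  show ?case
  proof (cases "i = Suc j")
    case True thus ?thesis using assms(1) by simp
  next
    case False thus ?thesis using Suc by (simp add: cf_rem_Suc)
  qed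
qed

fun qq :: "real \<Rightarrow> nat \<Rightarrow> int" where
  "qq \<alpha> 0 = 0"
| "qq \<alpha> (Suc 0) = 1"
| "qq \<alpha> (Suc (Suc k)) = cf_quot \<alpha> (Suc k) * qq \<alpha> (Suc k) + qq \<alpha> k"

fun pp :: "real \<Rightarrow> nat \<Rightarrow> int" where
  "pp \<alpha> 0 = 1"
| "pp \<alpha> (Suc 0) = 0"
| "pp \<alpha> (Suc (Suc k)) = cf_quot \<alpha> (Suc k) * pp \<alpha> (Suc k) + pp \<alpha> k"

definition EE :: "real \<Rightarrow> nat \<Rightarrow> real" where
  "EE \<alpha> k = of_int (qq \<alpha> k) * \<alpha> - of_int (pp \<alpha> k)"

lemma EE_rec: "EE \<alpha> (Suc (Suc k)) = of_int (cf_quot \<alpha> (Suc k)) * EE \<alpha> (Suc k) + EE \<alpha> k"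
  by (simp add: EE_def algebra_simps)

lemma cf_inv:
  assumes "0 \<le> \<alpha>" "\<alpha> < 1" "\<forall>i<k. cf_rem \<alpha> i \<noteq> 0"
  shows "EE \<alpha> (Suc k) = - cf_rem \<alpha> k * EE \<alpha> k
    \<and> of_int (qq \<alpha> (Suc k)) * \<bar>EE \<alpha> k\<bar> + of_int (qq \<alpha> k) * \<bar>EE \<alpha> (Suc k)\<bar> = 1
    \<and> 1 \<le> qq \<alpha> (Suc k) \<and> 0 \<le> qq \<alpha> k \<and> qq \<alpha> k \<le> qq \<alpha> (Suc k)
    \<and> (qq \<alpha> (Suc k) * pp \<alpha> k - qq \<alpha> k * pp \<alpha> (Suc k))^2 = 1"
  using assms(3)
proof (induction k)
  case 0
  show ?case by (simp add: EE_def)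
next
  case (Suc k)
  let ?x = "cf_rem \<alpha> k" let ?a = "cf_quot \<alpha> (Suc k)"
  have IH: "EE \<alpha> (Suc k) = - ?x * EE \<alpha> k"
    "of_int (qq \<alpha> (Suc k)) * \<bar>EE \<alpha> k\<bar> + of_int (qq \<alpha> k) * \<bar>EE \<alpha> (Suc k)\<bar> = 1"
    "1 \<le> qq \<alpha> (Suc k)" "0 \<le> qq \<alpha> k" "qq \<alpha> k \<le> qq \<alpha> (Suc k)"
    "(qq \<alpha> (Suc k) * pp \<alpha> k - qq \<alpha> k * pp \<alpha> (Suc k))^2 = 1"
    using Suc by auto
  have xnz: "?x \<noteq> 0" using Suc.prems by auto
  have xr: "0 < ?x" "?x < 1" using cf_rem_range[OF assms(1,2), of k] xnz by auto
  have x1: "cf_rem \<alpha> (Suc k) = 1 / ?x - of_int ?a"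
    using xnz by (simp add: cf_rem_Suc cf_quot_Suc frac_def)
  have x1nn: "0 \<le> cf_rem \<alpha> (Suc k)" using cf_rem_range[OF assms(1,2)] by blast
  have "1 < 1 / ?x" using xr by simp
  hence a1: "1 \<le> ?a" by (simp add: cf_quot_Suc le_floor_iff)
  have Ek: "EE \<alpha> k = - EE \<alpha> (Suc k) / ?x" using IH(1) xnz by (simp add: field_simps)
  have e1: "EE \<alpha> (Suc (Suc k)) = - cf_rem \<alpha> (Suc k) * EE \<alpha> (Suc k)"
    unfolding EE_rec Ek x1 using xnz by (simp add: field_simps)
  have absE: "\<bar>EE \<alpha> (Suc k)\<bar> = ?x * \<bar>EE \<alpha> k\<bar>" using IH(1) xr by (simp add: abs_mult)
  have absE2: "\<bar>EE \<alpha> (Suc (Suc k))\<bar> = cf_rem \<alpha> (Suc k) * \<bar>EE \<alpha> (Suc k)\<bar>"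
    using e1 x1nn by (simp add: abs_mult)
  have "of_int (qq \<alpha> (Suc (Suc k))) * \<bar>EE \<alpha> (Suc k)\<bar> + of_int (qq \<alpha> (Suc k)) * \<bar>EE \<alpha> (Suc (Suc k))\<bar>
      = of_int (qq \<alpha> (Suc k)) * \<bar>EE \<alpha> (Suc k)\<bar> * (of_int ?a + cf_rem \<alpha> (Suc k)) + of_int (qq \<alpha> k) * \<bar>EE \<alpha> (Suc k)\<bar>"
    unfolding absE2 by (simp add: algebra_simps)
  also have "of_int ?a + cf_rem \<alpha> (Suc k) = 1 / ?x" using x1 by simp
  also have "of_int (qq \<alpha> (Suc k)) * \<bar>EE \<alpha> (Suc k)\<bar> * (1 / ?x) = of_int (qq \<alpha> (Suc k)) * \<bar>EE \<alpha> k\<bar>"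
    unfolding absE using xnz by (simp add: field_simps)
  finally have d: "of_int (qq \<alpha> (Suc (Suc k))) * \<bar>EE \<alpha> (Suc k)\<bar> + of_int (qq \<alpha> (Suc k)) * \<bar>EE \<alpha> (Suc (Suc k))\<bar> = 1"
    using IH(2) by simp
  have q: "1 \<le> qq \<alpha> (Suc (Suc k))" "qq \<alpha> (Suc k) \<le> qq \<alpha> (Suc (Suc k))"
  proof -
    have "qq \<alpha> (Suc k) \<le> ?a * qq \<alpha> (Suc k)" using a1 IH(3) by simp
    thus "qq \<alpha> (Suc k) \<le> qq \<alpha> (Suc (Suc k))" using IH(4) by simp
    thus "1 \<le> qq \<alpha> (Suc (Suc k))" using IH(3) by simp
  qed
  have "qq \<alpha> (Suc (Suc k)) * pp \<alpha> (Suc k) - qq \<alpha> (Suc k) * pp \<alpha> (Suc (Suc k))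
      = - (qq \<alpha> (Suc k) * pp \<alpha> k - qq \<alpha> k * pp \<alpha> (Suc k))"
    by (simp add: algebra_simps)
  note det0 = this
  have det: "(qq \<alpha> (Suc (Suc k)) * pp \<alpha> (Suc k) - qq \<alpha> (Suc k) * pp \<alpha> (Suc (Suc k)))^2 = 1"
    using IH(6) unfolding det0 power2_minus .
  show ?case using e1 d q det IH(3) by simp
qed


lemma cf_quot_ge1:
  assumes "0 \<le> \<alpha>" "\<alpha> < 1" "cf_rem \<alpha> k \<noteq> 0" shows "1 \<le> cf_quot \<alpha> (Suc k)"
proof -
  have xr: "0 < cf_rem \<alpha> k" "cf_rem \<alpha> k < 1" using cf_rem_range[OF assms(1,2), of k] assms(3) by auto
  hence "1 < 1 / cf_rem \<alpha> k" by simp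
  thus ?thesis by (simp add: cf_quot_Suc le_floor_iff)
qed

lemma cf_good:
  assumes "0 \<le> \<alpha>" "\<alpha> < 1" "\<forall>i<k. cf_rem \<alpha> i \<noteq> 0"
  shows "of_int (qq \<alpha> (Suc k)) * \<bar>EE \<alpha> (Suc k)\<bar> \<le> cf_rem \<alpha> k"
proof -
  note I = cf_inv[OF assms]
  have x0: "0 \<le> cf_rem \<alpha> k" using cf_rem_range[OF assms(1,2)] by blast
  have a: "\<bar>EE \<alpha> (Suc k)\<bar> = cf_rem \<alpha> k * \<bar>EE \<alpha> k\<bar>" using I x0 by (simp add: abs_mult)
  have "0 \<le> of_int (qq \<alpha> k) * \<bar>EE \<alpha> (Suc k)\<bar>" using I by simp
  hence b: "of_int (qq \<alpha> (Suc k)) * \<bar>EE \<alpha> k\<bar> \<le> 1" using I by linarith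
  have "of_int (qq \<alpha> (Suc k)) * \<bar>EE \<alpha> (Suc k)\<bar> = cf_rem \<alpha> k * (of_int (qq \<alpha> (Suc k)) * \<bar>EE \<alpha> k\<bar>)"
    unfolding a by (simp add: algebra_simps)
  also have "\<dots> \<le> cf_rem \<alpha> k * 1" using b x0 by (intro mult_left_mono) auto
  finally show ?thesis by simp
qed

lemma cf_approx:
  assumes "0 \<le> \<alpha>" "\<alpha> < 1" "\<forall>i. cf_rem \<alpha> i \<noteq> 0"
  shows "of_int (qq \<alpha> (Suc (Suc k))) * \<bar>EE \<alpha> (Suc k)\<bar> \<le> 1"
proof -
  have P: "\<forall>i<Suc k. cf_rem \<alpha> i \<noteq> 0" using assms(3) by blast
  note I = cf_inv[OF assms(1,2) P]
  have d: "of_int (qq \<alpha> (Suc (Suc k))) * \<bar>EE \<alpha> (Suc k)\<bar> + of_int (qq \<alpha> (Suc k)) * \<bar>EE \<alpha> (Suc (Suc k))\<bar> = 1"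
    using I by blast
  have "0 \<le> qq \<alpha> (Suc k)" using I by blast
  hence "0 \<le> of_int (qq \<alpha> (Suc k)) * \<bar>EE \<alpha> (Suc (Suc k))\<bar>" by simp
  thus ?thesis using d by linarith
qed

lemma cf_growth:
  assumes "0 \<le> \<alpha>" "\<alpha> < 1" "\<forall>i. cf_rem \<alpha> i \<noteq> 0"
  shows "int k \<le> qq \<alpha> (Suc k)"
proof -
  have "int k \<le> qq \<alpha> (Suc k) \<and> int (Suc k) \<le> qq \<alpha> (Suc (Suc k))"
  proof (induction k)
    case 0
    have P: "\<forall>i<Suc 0. cf_rem \<alpha> i \<noteq> 0" using assms(3) by blast
    have "1 \<le> qq \<alpha> (Suc (Suc 0))" using cf_inv[OF assms(1,2) P] by blast
    thus ?case by simp
  next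
    case (Suc k)
    have a: "1 \<le> cf_quot \<alpha> (Suc (Suc k))" using cf_quot_ge1[OF assms(1,2)] assms(3) by blast
    have P: "\<forall>i<k. cf_rem \<alpha> i \<noteq> 0" using assms(3) by blast
    have q1: "1 \<le> qq \<alpha> (Suc k)" using cf_inv[OF assms(1,2) P] by blast
    have q2: "0 \<le> qq \<alpha> (Suc (Suc k))" using Suc by simp
    have "qq \<alpha> (Suc (Suc k)) \<le> cf_quot \<alpha> (Suc (Suc k)) * qq \<alpha> (Suc (Suc k))"
      using a q2 by (simp add: mult_le_cancel_right1)
    hence "qq \<alpha> (Suc (Suc k)) + 1 \<le> qq \<alpha> (Suc (Suc (Suc k)))" using q1 by simp
    thus ?case using Suc by simp
  qed
  thus ?thesis by simp
qed

lemma cf_upper: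
  assumes "0 \<le> \<alpha>" "\<alpha> < 1" "\<forall>i. cf_rem \<alpha> i \<noteq> 0" "pq_bounded \<alpha> B"
  shows "qq \<alpha> (Suc (Suc k)) \<le> (int B + 1) * qq \<alpha> (Suc k)"
proof -
  have a: "cf_quot \<alpha> (Suc k) \<le> int B" using assms(3,4) unfolding pq_bounded_def by auto
  have P: "\<forall>i<k. cf_rem \<alpha> i \<noteq> 0" using assms(3) by blast
  note I = cf_inv[OF assms(1,2) P]
  have q1: "1 \<le> qq \<alpha> (Suc k)" "qq \<alpha> k \<le> qq \<alpha> (Suc k)" using I by blast+
  have "cf_quot \<alpha> (Suc k) * qq \<alpha> (Suc k) \<le> int B * qq \<alpha> (Suc k)"
    using a q1 by (intro mult_right_mono) auto
  moreover have "qq \<alpha> (Suc (Suc k)) = cf_quot \<alpha> (Suc k) * qq \<alpha> (Suc k) + qq \<alpha> k" by simp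
  moreover have "(int B + 1) * qq \<alpha> (Suc k) = int B * qq \<alpha> (Suc k) + qq \<alpha> (Suc k)"
    by (simp add: algebra_simps)
  ultimately show ?thesis using q1 by linarith
qed

lemma Xsqrt_eq: "Xsqrt \<alpha> = {of_real (sqrt (real n)) * ee (real n * \<alpha>) | n. n \<ge> 1}"
  unfolding Xsqrt_def exp_ee ..

lemma abs_tri_aux: "\<bar>a::real\<bar> \<le> \<bar>a + b\<bar> + \<bar>b\<bar>"
  using abs_triangle_ineq[of "a+b" "-b"] by simp

lemma lin_aux: "a \<le> u + b \<Longrightarrow> c \<le> a \<Longrightarrow> b \<le> d \<Longrightarrow> c - d \<le> (u::real)"
  by linarith

lemma int_half: "1/2 \<le> \<bar>real_of_int m - 1/2\<bar>"
proof (cases "m \<ge> 1")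
  case True hence "real_of_int m \<ge> 1" by simp
  thus ?thesis by simp
next
  case False hence "real_of_int m \<le> 0" by simp
  thus ?thesis by simp
qed

lemma ee_round: "cmod (ee w - 1) = cmod (ee (w - of_int (round w)) - 1)"
proof -
  have "ee w = ee (w - of_int (round w)) * ee (of_int (round w))"
    by (simp add: ee_add[symmetric])
  thus ?thesis by (simp add: ee_int)
qed

lemma ee_lower_round: "2 * \<bar>w - of_int (round w)\<bar> \<le> cmod (ee w - 1)"
proof -
  have "\<bar>w - of_int (round w)\<bar> \<le> 1/2" using of_int_round_abs_le[of w] by linarith
  from ee_lower[OF this] show ?thesis by (simp add: ee_round[symmetric])
qed

lemma hole:
  fixes q :: nat and p :: int
  assumes r: "r > 0" and q: "q \<ge> 1" and h: "real q * \<bar>real q * \<alpha> - of_int p\<bar> \<le> 1/(96*r^2)"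
  shows "\<not> rel_dense r (Xsqrt \<alpha>)"
proof -
  define e where "e = real q * \<alpha> - of_int p"
  define R where "R = 3 * real q * r"
  define \<phi> where "\<phi> = 1/(2*real q) + R^2 * e / real q"
  define x where "x = of_real R * ee \<phi>"
  have qpos: "real q \<ge> 1" using q by simp
  have R0: "R \<ge> 0" using r q by (simp add: R_def)
  have re: "r^2 * \<bar>e\<bar> \<le> 1/(96 * real q)"
  proof -
    have "real q * \<bar>e\<bar> * r^2 \<le> 1/(96*r^2) * r^2" using h r by (intro mult_right_mono) (auto simp: e_def)
    hence "real q * (r^2 * \<bar>e\<bar>) \<le> 1/96" using r by (simp add: field_simps)
    thus ?thesis using qpos by (simp add: field_simps mult.commute)
  qed
  have "dist x z \<ge> r" if z: "z \<in> Xsqrt \<alpha>" for z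
  proof -
    obtain n where n: "n \<ge> 1" "z = of_real (sqrt (real n)) * ee (real n * \<alpha>)"
      using z unfolding Xsqrt_eq by blast
    have dxz: "dist x z = cmod (of_real (sqrt (real n)) * ee (real n * \<alpha>) - of_real R * ee \<phi>)"
      by (simp add: dist_norm n(2) x_def norm_minus_commute)
    show ?thesis
    proof (cases "\<bar>sqrt (real n) - R\<bar> \<ge> r")
      case True
      have "\<bar>cmod (of_real (sqrt (real n)) * ee (real n * \<alpha>)) - cmod (of_real R * ee \<phi>)\<bar>
          \<le> cmod (of_real (sqrt (real n)) * ee (real n * \<alpha>) - of_real R * ee \<phi>)"
        by (rule norm_triangle_ineq3)
      moreover have "cmod (of_real (sqrt (real n)) * ee (real n * \<alpha>)) = sqrt (real n)"
        by (simp add: norm_mult)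
      moreover have "cmod (of_real R * ee \<phi>) = R" using R0 by (simp add: norm_mult)
      ultimately show ?thesis using True dxz by simp
    next
      case False
      hence sn: "\<bar>sqrt (real n) - R\<bar> < r" by simp
      have Rr: "R - r \<ge> 2 * real q * r" using r qpos by (simp add: R_def algebra_simps)
      have mn: "min (sqrt (real n)) R \<ge> 2 * real q * r" using sn Rr r by (auto simp: min_def)
      define w where "w = real n * \<alpha> - \<phi>"
      define l where "l = round w"
      define u where "u = w - of_int l"
      have c1: "min (sqrt (real n)) R * cmod (ee (real n * \<alpha>) - ee \<phi>) \<le> dist x z"
        unfolding dxz using R0 by (intro dist_lower) auto
      have c2: "cmod (ee (real n * \<alpha>) - ee \<phi>) = cmod (ee w - 1)" by (simp add: ee_diff w_def)
      have c3: "2 * \<bar>u\<bar> \<le> cmod (ee w - 1)" using ee_lower_round[of w] by (simp add: u_def l_def)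
      have alpha: "\<alpha> = (e + of_int p) / real q" using qpos by (simp add: e_def field_simps)
      have u_eq: "u = (of_int (int n * p - l * int q) - 1/2) / real q + (real n - R^2) * e / real q"
        unfolding u_def w_def \<phi>_def alpha using qpos by (simp add: field_simps)
      have t1: "1/2 \<le> \<bar>real_of_int (int n * p - l * int q) - 1/2\<bar>" by (rule int_half)
      have nR: "\<bar>real n - R^2\<bar> \<le> 7 * real q * r^2"
      proof -
        have s2: "sqrt (real n) * sqrt (real n) = real n" by simp
        have "real n - R^2 = (sqrt (real n) - R) * (sqrt (real n) + R)"
          by (simp add: algebra_simps power2_eq_square s2)
        hence "\<bar>real n - R^2\<bar> = \<bar>sqrt (real n) - R\<bar> * (sqrt (real n) + R)"
          using R0 by (simp add: abs_mult)
        also have "\<dots> \<le> r * (2*R + r)"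
          using sn R0 by (intro mult_mono) auto
        also have "\<dots> = 6 * real q * r^2 + r^2" by (simp add: R_def power2_eq_square algebra_simps)
        also have "\<dots> \<le> 7 * real q * r^2"
        proof -
          have "1 * r^2 \<le> real q * r^2" using qpos by (intro mult_right_mono) auto
          thus ?thesis by (simp add: algebra_simps)
        qed
        finally show ?thesis .
      qed
      have t2: "\<bar>(real n - R^2) * e / real q\<bar> \<le> 7 / (96 * real q)"
      proof -
        have "\<bar>(real n - R^2) * e / real q\<bar> = \<bar>real n - R^2\<bar> * \<bar>e\<bar> / real q"
          by (simp add: abs_mult)
        also have "\<dots> \<le> 7 * real q * r^2 * \<bar>e\<bar> / real q"
          using nR qpos by (intro divide_right_mono mult_right_mono) auto
        also have "\<dots> = 7 * (r^2 * \<bar>e\<bar>)" using qpos by simp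
        also have "\<dots> \<le> 7 * (1/(96 * real q))" using re by simp
        finally show ?thesis by simp
      qed
      have t1': "1/(2 * real q) \<le> \<bar>(of_int (int n * p - l * int q) - 1/2) / real q\<bar>"
        using t1 qpos by (simp add: field_simps)
      have ub: "41 / (96 * real q) \<le> \<bar>u\<bar>"
      proof -
        have "\<bar>(of_int (int n * p - l * int q) - 1/2) / real q\<bar> \<le> \<bar>u\<bar> + \<bar>(real n - R^2) * e / real q\<bar>"
          unfolding u_eq by (rule abs_tri_aux)
        hence "1/(2 * real q) - 7 / (96 * real q) \<le> \<bar>u\<bar>" using t1' t2 by (rule lin_aux)
        moreover have "1/(2 * real q) - 7 / (96 * real q) = 41 / (96 * real q)" using qpos by (simp add: field_simps)
        ultimately show ?thesis by simp
      qed
      have "r \<le> 2 * real q * r * (2 * (41 / (96 * real q)))" using qpos r by (simp add: field_simps)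
      also have "\<dots> \<le> min (sqrt (real n)) R * cmod (ee w - 1)"
        using mn ub c3 r qpos R0 by (intro mult_mono) auto
      also have "\<dots> \<le> dist x z" using c1 c2 by simp
      finally show ?thesis .
    qed
  qed
  hence "ball x r \<inter> Xsqrt \<alpha> = {}" by fastforce
  thus ?thesis unfolding rel_dense_def by blast
qed

lemma part_b:
  assumes a0: "0 \<le> \<alpha>" and a1: "\<alpha> < 1" and r: "r > 0" and rd: "rel_dense r (Xsqrt \<alpha>)"
  shows "badly_approx \<alpha> \<and> pq_bounded \<alpha> (nat \<lfloor>96 * r\<^sup>2\<rfloor>)"
proof
  have "badly_approx_const \<alpha> (1/(96*r^2))"
    unfolding badly_approx_const_def
  proof (intro allI impI)
    fix p :: int and q :: nat assume q: "q \<ge> 1"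
    show "1/(96*r^2) \<le> real q * \<bar>real q * \<alpha> - real_of_int p\<bar>"
    proof (rule ccontr)
      assume "\<not> ?thesis"
      hence "real q * \<bar>real q * \<alpha> - real_of_int p\<bar> \<le> 1/(96*r^2)" by simp
      from hole[OF r q this] rd show False by blast
    qed
  qed
  moreover have "1/(96*r^2) > 0" using r by simp
  ultimately show "badly_approx \<alpha>" unfolding badly_approx_def by blast
next
  show "pq_bounded \<alpha> (nat \<lfloor>96 * r\<^sup>2\<rfloor>)"
    unfolding pq_bounded_def
  proof (intro allI impI)
    fix k :: nat assume k: "k \<ge> 1" and nz: "cf_rem \<alpha> (k - 1) \<noteq> 0"
    obtain j where kj: "k = Suc j" using k by (cases k) auto
    have nz': "cf_rem \<alpha> j \<noteq> 0" using nz kj by simp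
    have allnz: "\<forall>i<j. cf_rem \<alpha> i \<noteq> 0"
      using cf_rem_zero_mono[of \<alpha> _ j] nz' by (meson less_imp_le)
    show "cf_quot \<alpha> k \<le> int (nat \<lfloor>96 * r\<^sup>2\<rfloor>)"
    proof (rule ccontr)
      assume "\<not> ?thesis"
      hence "int (nat \<lfloor>96 * r\<^sup>2\<rfloor>) < \<lfloor>1 / cf_rem \<alpha> j\<rfloor>" by (simp add: kj cf_quot_Suc)
      hence "\<lfloor>96 * r\<^sup>2\<rfloor> + 1 \<le> \<lfloor>1 / cf_rem \<alpha> j\<rfloor>" by linarith
      hence "real_of_int (\<lfloor>96 * r\<^sup>2\<rfloor> + 1) \<le> 1 / cf_rem \<alpha> j" by (meson floor_le_iff le_floor_iff)
      moreover have "96 * r\<^sup>2 < real_of_int (\<lfloor>96 * r\<^sup>2\<rfloor> + 1)" by simp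
      ultimately have lt: "96 * r\<^sup>2 < 1 / cf_rem \<alpha> j" by linarith
      have xpos: "0 < cf_rem \<alpha> j" using cf_rem_range[OF a0 a1, of j] nz' by auto
      have "cf_rem \<alpha> j * (96 * r\<^sup>2) < 1" using lt xpos by (simp add: field_simps)
      hence xs: "cf_rem \<alpha> j < 1/(96 * r\<^sup>2)" using r by (simp add: field_simps)
      note I = cf_inv[OF a0 a1 allnz]
      have q1: "1 \<le> qq \<alpha> (Suc j)" using I by blast
      define qn where "qn = nat (qq \<alpha> (Suc j))"
      have qn: "real qn = real_of_int (qq \<alpha> (Suc j))" "qn \<ge> 1" using q1 by (simp_all add: qn_def)
      have "real qn * \<bar>real qn * \<alpha> - real_of_int (pp \<alpha> (Suc j))\<bar> = of_int (qq \<alpha> (Suc j)) * \<bar>EE \<alpha> (Suc j)\<bar>"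
        by (simp add: qn EE_def)
      also have "\<dots> \<le> cf_rem \<alpha> j" by (rule cf_good[OF a0 a1 allnz])
      finally have "real qn * \<bar>real qn * \<alpha> - real_of_int (pp \<alpha> (Suc j))\<bar> \<le> 1/(96 * r\<^sup>2)" using xs by simp
      from hole[OF r qn(2) this] rd show False by blast
    qed
  qed
qed

lemma alg_aux: "S > 0 \<Longrightarrow> y > 0 \<Longrightarrow> S^2/16 * (2*(C/(y*S)))^2 = C^2/(4*y^2::real)"
  by (simp add: field_simps power2_eq_square)

lemma subsingleton_card:
  assumes "\<forall>a\<in>S. \<forall>b\<in>S. a = b" shows "finite S \<and> card S \<le> 1"
proof (cases "S = {}")
  case True thus ?thesis by simp
next
  case False
  then obtain a where "a \<in> S" by blast
  hence "S = {a}" using assms by blast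
  thus ?thesis by simp
qed

lemma sep_c:
  assumes C: "C > 0" and ba: "badly_approx_const \<alpha> C" and n: "1 \<le> n" and nm: "n < m"
  shows "sqrt C \<le> cmod (of_real (sqrt (real m)) * ee (real m * \<alpha>) - of_real (sqrt (real n)) * ee (real n * \<alpha>))"
proof -
  define a where "a = sqrt (real n)"
  define b where "b = sqrt (real m)"
  define k where "k = m - n"
  define D where "D = cmod (of_real b * ee (real m * \<alpha>) - of_real a * ee (real n * \<alpha>))"
  have k1: "k \<ge> 1" using nm by (simp add: k_def)
  have a1: "a \<ge> 1" using n by (simp add: a_def)
  have ab: "a < b" using nm by (simp add: a_def b_def)
  have kab: "real k = (b - a) * (a + b)"
  proof -
    have "real k = real m - real n" using nm by (simp add: k_def of_nat_diff)
    also have "\<dots> = b*b - a*a" by (simp add: a_def b_def)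
    finally show ?thesis by (simp add: algebra_simps)
  qed
  have C12: "C \<le> 1/2"
  proof -
    have "C \<le> real 1 * \<bar>real 1 * \<alpha> - of_int (round \<alpha>)\<bar>" using ba unfolding badly_approx_const_def by blast
    moreover have "\<bar>\<alpha> - of_int (round \<alpha>)\<bar> \<le> 1/2" using of_int_round_abs_le[of \<alpha>] by linarith
    ultimately show ?thesis by simp
  qed
  have Dsq: "D^2 = (a - b)^2 + b * a * (cmod (ee (real m * \<alpha>) - ee (real n * \<alpha>)))^2"
    unfolding D_def by (rule dist_ident) auto
  have dif: "real m * \<alpha> - real n * \<alpha> = real k * \<alpha>" using nm by (simp add: k_def of_nat_diff algebra_simps)
  define t where "t = real k * \<alpha> - of_int (round (real k * \<alpha>))"
  have ct: "2 * \<bar>t\<bar> \<le> cmod (ee (real m * \<alpha>) - ee (real n * \<alpha>))"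
    using ee_lower_round[of "real k * \<alpha>"] by (simp add: ee_diff dif t_def)
  have kt: "C \<le> real k * \<bar>t\<bar>" using ba k1 unfolding badly_approx_const_def t_def by blast
  have "D^2 \<ge> C"
  proof (cases "b \<le> 4 * a")
    case True
    define y where "y = b - a"
    have y0: "y > 0" using ab by (simp add: y_def)
    have S: "a * b \<ge> (a + b)^2 / 16"
    proof -
      have "(a + b)^2 \<le> (2*b)^2" using ab a1 by (intro power_mono) auto
      moreover have "b * b \<le> 4 * (a * b)" using True ab a1 by (intro mult_right_mono[of b "4*a" b, simplified mult.assoc]) auto
      ultimately show ?thesis by (simp add: power2_eq_square algebra_simps)
    qed
    have "C / real k \<le> \<bar>t\<bar>" using kt k1 by (simp add: field_simps)
    hence "2 * (C / real k) \<le> cmod (ee (real m * \<alpha>) - ee (real n * \<alpha>))" using ct by linarith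
    hence c2: "(2 * (C / real k))^2 \<le> (cmod (ee (real m * \<alpha>) - ee (real n * \<alpha>)))^2"
      using C k1 by (intro power_mono) auto
    have "(a + b)^2 / 16 * (2 * (C / real k))^2 \<le> b * a * (cmod (ee (real m * \<alpha>) - ee (real n * \<alpha>)))^2"
      using S c2 a1 ab by (intro mult_mono) (auto simp: mult.commute)
    moreover have "(a + b)^2 / 16 * (2 * (C / real k))^2 = C^2 / (4 * y^2)"
      using y0 a1 ab unfolding kab y_def[symmetric] by (intro alg_aux) auto
    ultimately have "D^2 \<ge> y^2 + C^2 / (4 * y^2)" using Dsq by (simp add: y_def power2_commute)
    moreover have "y^2 + C^2 / (4 * y^2) \<ge> C"
    proof -
      have "0 \<le> (y^2 - C/2)^2" by simp
      hence "C * y^2 \<le> y^2 * y^2 + C^2/4" by (simp add: power2_eq_square algebra_simps)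
      thus ?thesis using y0 by (simp add: field_simps power2_eq_square)
    qed
    ultimately show ?thesis by linarith
  next
    case False
    have "b \<ge> 1" using ab a1 by simp
    hence "b - a \<ge> 3/4" using False by linarith
    hence "(b - a)^2 \<ge> (3/4)^2" by (intro power_mono) auto
    moreover have "(3/4::real)^2 = 9/16" by (simp add: power2_eq_square)
    ultimately have h1: "(a - b)^2 \<ge> 9/16" by (simp add: power2_commute)
    have h2: "0 \<le> b * a * (cmod (ee (real m * \<alpha>) - ee (real n * \<alpha>)))^2" using ab a1 by simp
    have "D^2 \<ge> 9/16" using Dsq h1 h2 by linarith
    thus ?thesis using C12 by linarith
  qed
  hence "sqrt C \<le> sqrt (D^2)" by (rule real_sqrt_le_mono)
  thus ?thesis by (simp add: D_def a_def b_def)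
qed

lemma part_c:
  assumes C: "C > 0" and ba: "badly_approx_const \<alpha> C"
  shows "unif_discrete (sqrt C / 2) (Xsqrt \<alpha>)"
  unfolding unif_discrete_def
proof
  fix x
  have "\<forall>u\<in>ball x (sqrt C / 2) \<inter> Xsqrt \<alpha>. \<forall>v\<in>ball x (sqrt C / 2) \<inter> Xsqrt \<alpha>. u = v"
  proof (intro ballI, rule ccontr)
    fix u v assume u: "u \<in> ball x (sqrt C / 2) \<inter> Xsqrt \<alpha>" and v: "v \<in> ball x (sqrt C / 2) \<inter> Xsqrt \<alpha>" and uv: "u \<noteq> v"
    obtain n where n: "n \<ge> 1" "u = of_real (sqrt (real n)) * ee (real n * \<alpha>)" using u unfolding Xsqrt_eq by blast
    obtain m where m: "m \<ge> 1" "v = of_real (sqrt (real m)) * ee (real m * \<alpha>)" using v unfolding Xsqrt_eq by blast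
    have "dist u v \<le> dist x u + dist x v" by (metis dist_commute dist_triangle)
    also have "\<dots> < sqrt C" using u v by simp
    finally have d: "cmod (u - v) < sqrt C" by (simp add: dist_norm)
    have "n \<noteq> m" using uv n m by auto
    hence "n < m \<or> m < n" by auto
    thus False
    proof
      assume "n < m" from sep_c[OF C ba n(1) this] d show False
        by (simp add: n m norm_minus_commute)
    next
      assume "m < n" from sep_c[OF C ba m(1) this] d show False
        by (simp add: n m)
    qed
  qed
  from subsingleton_card[OF this]
  show "finite (ball x (sqrt C / 2) \<inter> Xsqrt \<alpha>) \<and> card (ball x (sqrt C / 2) \<inter> Xsqrt \<alpha>) \<le> 1" .
qed

definition zz :: "real \<Rightarrow> nat \<Rightarrow> complex" where
  "zz \<alpha> n = of_real (sqrt (real n)) * ee (real n * \<alpha>)"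

lemma zz_in: "n \<ge> 1 \<Longrightarrow> zz \<alpha> n \<in> Xsqrt \<alpha>"
  unfolding Xsqrt_eq zz_def by blast

lemma norm_zz: "cmod (zz \<alpha> n) = sqrt (real n)"
  by (simp add: zz_def norm_mult)

lemma sep_d:
  assumes s: "s > 0" and ud: "unif_discrete s (Xsqrt \<alpha>)" and n: "n \<ge> 1" and m: "m \<ge> 1" and nm: "n \<noteq> m"
  shows "2 * s \<le> cmod (zz \<alpha> n - zz \<alpha> m)"
proof (rule ccontr)
  assume "\<not> ?thesis"
  hence lt: "cmod (zz \<alpha> n - zz \<alpha> m) < 2 * s" by simp
  define c where "c = (zz \<alpha> n + zz \<alpha> m) / 2"
  have "dist c (zz \<alpha> n) = cmod (zz \<alpha> n - zz \<alpha> m) / 2"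
    by (simp add: c_def dist_norm field_simps norm_minus_commute)
  hence d1: "zz \<alpha> n \<in> ball c s" using lt by simp
  have "dist c (zz \<alpha> m) = cmod (zz \<alpha> n - zz \<alpha> m) / 2"
    by (simp add: c_def dist_norm field_simps)
  hence d2: "zz \<alpha> m \<in> ball c s" using lt by simp
  have ne: "zz \<alpha> n \<noteq> zz \<alpha> m"
  proof
    assume "zz \<alpha> n = zz \<alpha> m"
    hence "sqrt (real n) = sqrt (real m)" using norm_zz by metis
    thus False using nm by simp
  qed
  have sub: "{zz \<alpha> n, zz \<alpha> m} \<subseteq> ball c s \<inter> Xsqrt \<alpha>" using d1 d2 zz_in n m by auto
  have fin: "finite (ball c s \<inter> Xsqrt \<alpha>)" "card (ball c s \<inter> Xsqrt \<alpha>) \<le> 1"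
    using ud unfolding unif_discrete_def by auto
  have "card {zz \<alpha> n, zz \<alpha> m} \<le> card (ball c s \<inter> Xsqrt \<alpha>)" by (rule card_mono[OF fin(1) sub])
  thus False using ne fin(2) by simp
qed

lemma part_d:
  assumes s: "s > 0" and ud: "unif_discrete s (Xsqrt \<alpha>)"
  shows "badly_approx_const \<alpha> (s\<^sup>2 / 53)"
  unfolding badly_approx_const_def
proof (intro allI impI)
  fix p :: int and q :: nat assume q: "q \<ge> 1"
  show "s\<^sup>2 / 53 \<le> real q * \<bar>real q * \<alpha> - real_of_int p\<bar>"
  proof (rule ccontr)
    assume neg: "\<not> ?thesis"
    define Q where "Q = real q"
    define e where "e = Q * \<alpha> - of_int p"
    have Q1: "Q \<ge> 1" using q by (simp add: Q_def)
    have hyp: "Q * \<bar>e\<bar> < s^2/53" using neg by (simp add: Q_def e_def)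
    have s54: "s \<le> 5/4"
    proof -
      have "2 * s \<le> cmod (zz \<alpha> 1 - zz \<alpha> 2)" by (rule sep_d[OF s ud]) auto
      also have "\<dots> \<le> cmod (zz \<alpha> 1) + cmod (zz \<alpha> 2)" by (rule norm_triangle_ineq4)
      also have "\<dots> = 1 + sqrt 2" by (simp add: norm_zz)
      also have "sqrt 2 \<le> 3/2" by (rule real_le_lsqrt) (auto simp: power2_eq_square)
      finally show ?thesis by simp
    qed
    define X where "X = Q^2 / (2 * s^2)"
    define n where "n = nat \<lceil>X\<rceil>"
    have X0: "X > 0" using Q1 s by (simp add: X_def)
    have nX: "X \<le> real n" "real n \<le> X + 1" using X0 by (simp_all add: n_def)
    have n1: "n \<ge> 1" using nX X0 by simp
    define m where "m = n + q"
    define a where "a = sqrt (real n)"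
    define b where "b = sqrt (real m)"
    have a0: "a > 0" using n1 by (simp add: a_def)
    have ab: "a \<le> b" by (simp add: a_def b_def m_def)
    have bb: "b * b = real n + Q" by (simp add: b_def m_def Q_def)
    have aa: "a * a = real n" by (simp add: a_def)
    define cm where "cm = cmod (ee (real m * \<alpha>) - ee (real n * \<alpha>))"
    define D where "D = cmod (zz \<alpha> m - zz \<alpha> n)"
    have D2s: "2 * s \<le> D" unfolding D_def using sep_d[OF s ud, of m n] n1 q by (simp add: m_def)
    have Dsq: "D^2 = (a - b)^2 + b * a * cm^2"
      unfolding D_def cm_def zz_def a_def[symmetric] b_def[symmetric] by (rule dist_ident) auto
    have cm_le: "cm \<le> 2 * pi * \<bar>e\<bar>"
    proof -
      have "real m * \<alpha> - real n * \<alpha> = e + of_int p" by (simp add: m_def e_def Q_def algebra_simps)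
      hence "cm = cmod (ee (e + of_int p) - 1)" by (simp add: cm_def ee_diff)
      also have "\<dots> = cmod (ee e - 1)" by (simp add: ee_add ee_int)
      also have "\<dots> \<le> 2 * pi * \<bar>e\<bar>" by (rule ee_upper)
      finally show ?thesis .
    qed
    have t1: "(a - b)^2 \<le> s^2 / 2"
    proof -
      have "(b - a) * (a + b) = Q" using aa bb by (simp add: algebra_simps)
      hence "(b - a) * (a + b) * (b - a) \<le> Q * (b - a)" by simp
      moreover have "(b - a) * (2 * a) \<le> (b - a) * (a + b)" using ab by (intro mult_left_mono) auto
      hence "(b - a) * (2 * a) * (b - a) \<le> (b - a) * (a + b) * (b - a)" using ab by (intro mult_right_mono) auto
      ultimately have h90: "(b - a)^2 * (2 * a) \<le> Q * (b - a)" by (simp add: power2_eq_square algebra_simps)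
      have "(b - a)^2 * (2 * a) * (2 * a) \<le> Q * ((b - a) * (2 * a))" using mult_right_mono[OF h90, of "2*a"] a0 by (simp add: algebra_simps)
      also have "\<dots> \<le> Q * Q"
      proof -
        have "(b - a) * (2 * a) \<le> Q" using \<open>(b - a) * (a + b) = Q\<close> \<open>(b - a) * (2 * a) \<le> (b - a) * (a + b)\<close> by simp
        thus ?thesis using Q1 by (intro mult_left_mono) auto
      qed
      finally have h97: "(b - a)^2 * (2 * a) * (2 * a) \<le> Q * Q" .
      have e98: "(b - a)^2 * (4 * real n) = (b - a)^2 * (2 * a) * (2 * a)" by (simp add: aa[symmetric] algebra_simps)
      have h98: "(b - a)^2 * (4 * real n) \<le> Q * Q" unfolding e98 by (rule h97)
      moreover have "Q * Q \<le> 2 * s^2 * real n" using nX(1) s by (simp add: X_def field_simps power2_eq_square)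
      moreover have "(s^2 / 2) * (4 * real n) = 2 * s^2 * real n" by simp
      ultimately have "(b - a)^2 * (4 * real n) \<le> (s^2 / 2) * (4 * real n)" by linarith
      hence "(b - a)^2 \<le> s^2 / 2" using n1 by (simp add: mult_le_cancel_right)
      thus ?thesis by (simp add: power2_commute)
    qed
    have t2: "b * a * cm^2 \<le> s^2"
    proof -
      define K where "K = 1 / (2 * s^2) + 2"
      have ba: "b * a \<le> Q^2 * K"
      proof -
        have "b * a \<le> b * b" using ab a0 by (intro mult_left_mono) auto
        also have "\<dots> = real n + Q" by (rule bb)
        also have "\<dots> \<le> X + 1 + Q" using nX by simp
        also have "\<dots> \<le> X + 2 * Q^2"
        proof -
          have "1 \<le> Q^2" using Q1 by (simp add: one_le_power)
          moreover have "Q \<le> Q^2" using Q1 by (simp add: power2_eq_square)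
          ultimately show ?thesis by simp
        qed
        also have "\<dots> = Q^2 * K" using s by (simp add: X_def K_def field_simps)
        finally show ?thesis .
      qed
      have cm2: "cm^2 \<le> 4 * pi^2 * e^2"
      proof -
        have "cm^2 \<le> (2 * pi * \<bar>e\<bar>)^2" using cm_le by (intro power_mono) (auto simp: cm_def)
        thus ?thesis by (simp add: power_mult_distrib)
      qed
      have Qe: "(Q * \<bar>e\<bar>)^2 \<le> (s^2/53)^2" using hyp Q1 by (intro power_mono) auto
      have K0: "K \<ge> 0" by (simp add: K_def)
      have "b * a * cm^2 \<le> (Q^2 * K) * (4 * pi^2 * e^2)"
        by (rule mult_mono[OF ba cm2]) (use K0 in auto)
      also have "\<dots> = K * 4 * pi^2 * (Q * \<bar>e\<bar>)^2" by (simp add: power_mult_distrib algebra_simps)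
      also have "\<dots> \<le> K * 4 * pi^2 * (s^2/53)^2" using Qe K0 by (intro mult_left_mono) auto
      also have "\<dots> = 4 * pi^2 * (K * s^4) / 2809" by (simp add: power_divide algebra_simps power2_eq_square power4_eq_xxxx)
      also have "K * s^4 = s^2/2 + 2 * (s^2 * s^2)" using s by (simp add: K_def field_simps power2_eq_square power4_eq_xxxx)
      also have "\<dots> \<le> s^2/2 + 2 * (s^2 * (25/16))"
      proof -
        have "s^2 \<le> (5/4)^2" using s54 s by (intro power_mono) auto
        hence "s^2 \<le> 25/16" by (simp add: power2_eq_square)
        hence "s^2 * s^2 \<le> s^2 * (25/16)" by (intro mult_left_mono) auto
        thus ?thesis by linarith
      qed
      also have "4 * pi^2 * (s^2/2 + 2 * (s^2 * (25/16))) / 2809 \<le> 4 * 16 * (s^2/2 + 2 * (s^2 * (25/16))) / 2809"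
      proof -
        have "pi^2 \<le> 4^2" using pi_less_4 pi_gt_zero by (intro power_mono) auto
        thus ?thesis using s by (intro divide_right_mono mult_right_mono) auto
      qed
      also have "\<dots> \<le> s^2" using s by (simp add: field_simps)
      finally show ?thesis by simp
    qed
    have "D^2 \<le> s^2/2 + s^2" using Dsq t1 t2 by linarith
    moreover have "(2 * s)^2 \<le> D^2" using D2s s by (intro power_mono) auto
    moreover have "(2 * s)^2 = 4 * s^2" by (simp add: power2_eq_square)
    moreover have "0 < s^2" using s by simp
    ultimately show False by linarith
  qed
qed

lemma irr:
  assumes a0: "0 \<le> \<alpha>" and a1: "\<alpha> < 1" and ba: "badly_approx \<alpha>"
  shows "\<forall>i. cf_rem \<alpha> i \<noteq> 0"
proof (rule ccontr)
  assume "\<not> ?thesis"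
  then obtain i where "cf_rem \<alpha> i = 0" by blast
  then obtain j where j: "cf_rem \<alpha> j = 0" "\<forall>i<j. cf_rem \<alpha> i \<noteq> 0"
    using exists_least_iff[of "\<lambda>i. cf_rem \<alpha> i = 0"] by blast
  note I = cf_inv[OF a0 a1 j(2)]
  have E0: "EE \<alpha> (Suc j) = 0" using I j(1) by simp
  have q1: "1 \<le> qq \<alpha> (Suc j)" using I by blast
  obtain C where C: "C > 0" "badly_approx_const \<alpha> C" using ba unfolding badly_approx_def by blast
  define qn where "qn = nat (qq \<alpha> (Suc j))"
  have qn: "real qn = real_of_int (qq \<alpha> (Suc j))" "qn \<ge> 1" using q1 by (simp_all add: qn_def)
  have "C \<le> real qn * \<bar>real qn * \<alpha> - real_of_int (pp \<alpha> (Suc j))\<bar>"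
    using C(2) qn(2) unfolding badly_approx_const_def by blast
  also have "\<dots> = 0" using E0 by (simp add: qn(1) EE_def)
  finally show False using C(1) by simp
qed

lemma exists_k:
  assumes a0: "0 \<le> \<alpha>" and a1: "\<alpha> < 1" and nz: "\<forall>i. cf_rem \<alpha> i \<noteq> 0" and N: "N \<ge> 1"
  shows "\<exists>k. qq \<alpha> (Suc k) \<le> int N \<and> int N < qq \<alpha> (Suc (Suc k))"
proof -
  define S where "S = {k. qq \<alpha> (Suc k) \<le> int N}"
  have 0: "0 \<in> S" using N by (simp add: S_def)
  have "S \<subseteq> {..N}"
  proof
    fix k assume "k \<in> S"
    hence "int k \<le> int N" using cf_growth[OF a0 a1 nz, of k] by (simp add: S_def)
    thus "k \<in> {..N}" by simp
  qed
  hence fin: "finite S" by (rule finite_subset) simp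
  define k where "k = Max S"
  have kS: "k \<in> S" unfolding k_def using 0 by (intro Max_in[OF fin]) auto
  have "Suc k \<notin> S"
  proof
    assume "Suc k \<in> S"
    from Max_ge[OF fin this] show False by (simp add: k_def)
  qed
  thus ?thesis using kS by (auto simp: S_def)
qed

lemma gap:
  assumes a0: "0 \<le> \<alpha>" and a1: "\<alpha> < 1" and nz: "\<forall>i. cf_rem \<alpha> i \<noteq> 0"
  shows "\<exists>m::nat. int m < qq \<alpha> (Suc k) \<and> (\<exists>l::int. \<bar>real (M + m) * \<alpha> - t - of_int l\<bar>
            \<le> 1 / (2 * of_int (qq \<alpha> (Suc k))) + \<bar>EE \<alpha> (Suc k)\<bar>)"
proof -
  have P: "\<forall>i<k. cf_rem \<alpha> i \<noteq> 0" using nz by blast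
  note I = cf_inv[OF a0 a1 P]
  define q where "q = qq \<alpha> (Suc k)"
  define p where "p = pp \<alpha> (Suc k)"
  define e where "e = EE \<alpha> (Suc k)"
  define D where "D = q * pp \<alpha> k - qq \<alpha> k * p"
  have q1: "1 \<le> q" using I by (simp add: q_def)
  have D2: "D * D = 1" using I by (simp add: D_def q_def p_def power2_eq_square)
  have qr: "real_of_int q \<ge> 1" using q1 by simp
  define s where "s = t - real M * \<alpha>"
  define j0 where "j0 = round (s * of_int q)"
  define u where "u = - D * qq \<alpha> k"
  define mi where "mi = (j0 * u) mod q"
  define L where "L = - j0 * D * pp \<alpha> k - (j0 * u div q) * p"
  have mi0: "0 \<le> mi" "mi < q" using q1 by (simp_all add: mi_def)
  have up: "u * p = 1 - D * q * pp \<alpha> k"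
  proof -
    have "u * p = D * (- qq \<alpha> k * p)" by (simp add: u_def)
    also have "- qq \<alpha> k * p = D - q * pp \<alpha> k" by (simp add: D_def)
    also have "D * (D - q * pp \<alpha> k) = D * D - D * q * pp \<alpha> k" by (simp add: algebra_simps)
    finally show ?thesis using D2 by simp
  qed
  have mieq: "mi = j0 * u - (j0 * u div q) * q" using minus_div_mult_eq_mod[of "j0 * u" q] by (simp add: mi_def)
  have key: "mi * p = j0 + q * L"
  proof -
    have "mi * p = j0 * (u * p) - (j0 * u div q) * q * p" by (simp add: mieq algebra_simps)
    also have "\<dots> = j0 + q * L" unfolding up L_def by (simp add: algebra_simps)
    finally show ?thesis .
  qed
  define m where "m = nat mi"
  have m: "int m = mi" using mi0 by (simp add: m_def)
  have alpha: "\<alpha> = (e + of_int p) / of_int q" using qr by (simp add: e_def EE_def q_def p_def field_simps)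
  have "real (M + m) * \<alpha> - t - of_int L = (of_int j0 / of_int q - s) + of_int mi * e / of_int q"
  proof -
    have "real (M + m) * \<alpha> = real M * \<alpha> + of_int mi * \<alpha>" using m by (simp add: algebra_simps)
    also have "of_int mi * \<alpha> = (of_int (mi * p) + of_int mi * e) / of_int q"
      unfolding alpha using qr by (simp add: field_simps)
    also have "of_int (mi * p) = (of_int j0 + of_int q * of_int L :: real)" unfolding key by simp
    finally show ?thesis using qr by (simp add: s_def field_simps)
  qed
  moreover have "\<bar>of_int j0 / of_int q - s\<bar> \<le> 1 / (2 * of_int q)"
  proof -
    have "\<bar>of_int j0 - s * of_int q\<bar> \<le> 1/2" using of_int_round_abs_le[of "s * of_int q"] by (simp add: j0_def)
    hence "\<bar>of_int j0 - s * of_int q\<bar> / of_int q \<le> (1/2) / of_int q" using qr by (intro divide_right_mono) auto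
    moreover have "\<bar>of_int j0 - s * of_int q\<bar> / of_int q = \<bar>of_int j0 / of_int q - s\<bar>" using qr
      by (simp add: field_simps abs_div_pos[symmetric])
    ultimately show ?thesis by simp
  qed
  moreover have "\<bar>of_int mi * e / of_int q\<bar> \<le> \<bar>e\<bar>"
  proof -
    have "\<bar>of_int mi * e / of_int q\<bar> = (of_int mi / of_int q) * \<bar>e\<bar>" using mi0 qr by (simp add: abs_mult)
    also have "\<dots> \<le> 1 * \<bar>e\<bar>" using mi0 qr by (intro mult_right_mono) auto
    finally show ?thesis by simp
  qed
  ultimately have "\<bar>real (M + m) * \<alpha> - t - of_int L\<bar> \<le> 1 / (2 * of_int q) + \<bar>e\<bar>"
    by (smt (verit))
  moreover have "int m < q" using m mi0 by simp
  ultimately show ?thesis unfolding q_def e_def by blast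
qed

lemma part_a:
  assumes a0: "0 \<le> \<alpha>" and a1: "\<alpha> < 1" and B: "B > 0" and ba: "badly_approx \<alpha>" and pq: "pq_bounded \<alpha> B"
  shows "rel_dense (6 * sqrt (real B)) (Xsqrt \<alpha>)"
  unfolding rel_dense_def
proof
  fix x
  define R where "R = cmod x"
  define sB where "sB = sqrt (real B)"
  have sB1: "sB \<ge> 1" using B by (simp add: sB_def)
  have sBsq: "sB * sB = real B" by (simp add: sB_def)
  show "ball x (6 * sqrt (real B)) \<inter> Xsqrt \<alpha> \<noteq> {}"
  proof (cases "R < 6 * sB - 1")
    case True
    have "dist x (zz \<alpha> 1) \<le> cmod x + cmod (zz \<alpha> 1)" unfolding dist_norm by (rule norm_triangle_ineq4)
    also have "\<dots> = R + 1" by (simp add: R_def norm_zz)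
    finally have "zz \<alpha> 1 \<in> ball x (6 * sqrt (real B))" using True by (simp add: sB_def)
    thus ?thesis using zz_in[of 1 \<alpha>] by blast
  next
    case False
    hence R6: "R \<ge> 6 * sB - 1" by simp
    have R5: "R \<ge> 5 * sB" "R \<ge> 5" using R6 sB1 by linarith+
    have Rpos: "R > 0" using R5 by simp
    have nz: "\<forall>i. cf_rem \<alpha> i \<noteq> 0" by (rule irr[OF a0 a1 ba])
    define N where "N = nat \<lceil>5 * sB * R\<rceil>"
    have sBR: "5 * sB * R \<ge> 25"
    proof -
      have "5 * 1 * 5 \<le> 5 * sB * R" using sB1 R5 by (intro mult_mono) auto
      thus ?thesis by simp
    qed
    have NR: "5 * sB * R \<le> real N" "real N \<le> 5 * sB * R + 1" using sBR by (simp_all add: N_def)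
    have "real N \<ge> 1" using NR sBR by linarith
    hence N1: "N \<ge> 1" by simp
    obtain k where k: "qq \<alpha> (Suc k) \<le> int N" "int N < qq \<alpha> (Suc (Suc k))"
      using exists_k[OF a0 a1 nz N1] by blast
    define q where "q = qq \<alpha> (Suc k)"
    define e where "e = EE \<alpha> (Suc k)"
    define q2 where "q2 = qq \<alpha> (Suc (Suc k))"
    define qr where "qr = real_of_int q"
    have P: "\<forall>i<k. cf_rem \<alpha> i \<noteq> 0" using nz by blast
    have q1: "qr \<ge> 1" using cf_inv[OF a0 a1 P] by (simp add: qr_def q_def)
    have hq: "qr \<le> real N" using k(1) by (simp add: qr_def q_def)
    have hN0: "int N + 1 \<le> q2" using k(2) unfolding q2_def by linarith
    have "real_of_int (int N + 1) \<le> real_of_int q2" using hN0 by (simp only: of_int_le_iff)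
    hence hN: "real N + 1 \<le> real_of_int q2" by simp
    have app: "real_of_int q2 * \<bar>e\<bar> \<le> 1" using cf_approx[OF a0 a1 nz, of k] by (simp add: q2_def e_def)
    have eN: "\<bar>e\<bar> \<le> 1 / real N"
    proof -
      have "real N * \<bar>e\<bar> \<le> real_of_int q2 * \<bar>e\<bar>" using hN by (intro mult_right_mono) auto
      hence "real N * \<bar>e\<bar> \<le> 1" using app by linarith
      thus ?thesis using N1 by (simp add: field_simps)
    qed
    have upq: "real N \<le> (real B + 1) * qr"
    proof -
      have "q2 \<le> (int B + 1) * q" using cf_upper[OF a0 a1 nz pq, of k] by (simp add: q2_def q_def)
      hence "real_of_int q2 \<le> real_of_int ((int B + 1) * q)" by (simp only: of_int_le_iff)
      hence "real_of_int q2 \<le> (real B + 1) * qr" by (simp add: qr_def)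
      thus ?thesis using hN by linarith
    qed
    have err: "1 / (2 * qr) + \<bar>e\<bar> \<le> 2 * real B / real N"
    proof -
      have "1 / (2 * qr) \<le> (real B + 1) / (2 * real N)" using upq q1 N1 by (simp add: field_simps)
      moreover have "(real B + 1) / (2 * real N) + 1 / real N \<le> 2 * real B / real N"
        using B N1 by (simp add: field_simps)
      ultimately show ?thesis using eN by linarith
    qed
    define M where "M = nat \<lceil>R^2 - qr/2\<rceil>"
    have Rq: "R^2 - qr/2 > 0"
    proof -
      have "R * R \<ge> 5 * sB * R" using R5 Rpos by (intro mult_right_mono) auto
      hence "R^2 \<ge> 5 * sB * R" by (simp add: power2_eq_square)
      moreover have "qr \<le> 5 * sB * R + 1" using hq NR by linarith
      ultimately show ?thesis using sBR by linarith
    qed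
    have Mb: "R^2 - qr/2 \<le> real M" "real M < R^2 - qr/2 + 1" using Rq by (simp_all add: M_def) linarith+
    define \<theta> where "\<theta> = Arg x / (2 * pi)"
    have xrep: "x = of_real R * ee \<theta>"
    proof -
      have "ee \<theta> = cis (Arg x)" by (simp add: ee_def \<theta>_def)
      thus ?thesis using rcis_cmod_Arg[of x] by (simp add: rcis_def R_def)
    qed
    obtain m l where ml: "int m < q" "\<bar>real (M + m) * \<alpha> - \<theta> - of_int l\<bar> \<le> 1 / (2 * qr) + \<bar>e\<bar>"
      using gap[OF a0 a1 nz, of k M \<theta>] unfolding q_def e_def qr_def by blast
    define n where "n = M + m"
    have mq: "real m \<le> qr - 1" using ml(1) by (simp add: qr_def)
    have nb: "\<bar>real n - R^2\<bar> \<le> real N / 2"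
    proof -
      have "R^2 - qr/2 \<le> real n" using Mb by (simp add: n_def)
      moreover have "real n < R^2 + qr/2" using Mb mq by (simp add: n_def)
      ultimately have "\<bar>real n - R^2\<bar> \<le> qr/2" by linarith
      thus ?thesis using hq by linarith
    qed
    have rad: "\<bar>sqrt (real n) - R\<bar> \<le> real N / (2 * R)"
    proof -
      have s2: "sqrt (real n) * sqrt (real n) = real n" by simp
      have "real n - R^2 = (sqrt (real n) - R) * (sqrt (real n) + R)"
        by (simp add: algebra_simps power2_eq_square s2)
      hence "\<bar>real n - R^2\<bar> = \<bar>sqrt (real n) - R\<bar> * (sqrt (real n) + R)"
        using Rpos by (simp add: abs_mult)
      moreover have "\<bar>sqrt (real n) - R\<bar> * R \<le> \<bar>sqrt (real n) - R\<bar> * (sqrt (real n) + R)"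
        by (intro mult_left_mono) auto
      ultimately have "\<bar>sqrt (real n) - R\<bar> * R \<le> real N / 2" using nb by linarith
      thus ?thesis using Rpos by (simp add: field_simps)
    qed
    have ang: "cmod (ee (real n * \<alpha>) - ee \<theta>) \<le> 2 * pi * (2 * real B / real N)"
    proof -
      define w where "w = real n * \<alpha> - \<theta> - of_int l"
      have "cmod (ee (real n * \<alpha>) - ee \<theta>) = cmod (ee (w + of_int l) - 1)"
        by (simp add: ee_diff w_def)
      also have "\<dots> = cmod (ee w - 1)" by (simp add: ee_add ee_int)
      also have "\<dots> \<le> 2 * pi * \<bar>w\<bar>" by (rule ee_upper)
      also have "\<dots> \<le> 2 * pi * (2 * real B / real N)"
        using ml(2) err unfolding w_def n_def by (intro mult_left_mono) auto
      finally show ?thesis .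
    qed
    define z where "z = zz \<alpha> n"
    have zX: "z \<in> Xsqrt \<alpha>" using Mb Rq unfolding z_def n_def by (intro zz_in) linarith
    have zx: "z - x = of_real (sqrt (real n) - R) * ee (real n * \<alpha>) + of_real R * (ee (real n * \<alpha>) - ee \<theta>)"
      unfolding z_def zz_def xrep by (simp add: algebra_simps)
    have "dist x z = cmod (of_real (sqrt (real n) - R) * ee (real n * \<alpha>) + of_real R * (ee (real n * \<alpha>) - ee \<theta>))"
      unfolding zx[symmetric] by (simp add: dist_norm norm_minus_commute)
    also have "\<dots> \<le> cmod (of_real (sqrt (real n) - R) * ee (real n * \<alpha>)) + cmod (of_real R * (ee (real n * \<alpha>) - ee \<theta>))"
      by (rule norm_triangle_ineq)
    also have "\<dots> = \<bar>sqrt (real n) - R\<bar> + R * cmod (ee (real n * \<alpha>) - ee \<theta>)"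
    proof -
      have h1: "cmod (of_real (sqrt (real n) - R) * ee (real n * \<alpha>)) = \<bar>sqrt (real n) - R\<bar>"
        by (simp only: norm_mult norm_of_real norm_ee mult_1_right)
      have h2: "cmod (of_real R * (ee (real n * \<alpha>) - ee \<theta>)) = R * cmod (ee (real n * \<alpha>) - ee \<theta>)"
        using Rpos by (simp add: norm_mult)
      show ?thesis unfolding h1 h2 ..
    qed
    also have "\<dots> \<le> real N / (2 * R) + R * (2 * pi * (2 * real B / real N))"
      using rad ang Rpos by (intro add_mono mult_left_mono) auto
    also have "\<dots> < 6 * sB"
    proof -
      have t1: "real N / (2 * R) \<le> 5/2 * sB + 1/10"
      proof -
        have "real N / (2 * R) \<le> (5 * sB * R + 1) / (2 * R)" using NR Rpos by (intro divide_right_mono) auto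
        also have "\<dots> = 5/2 * sB + 1 / (2 * R)" using Rpos by (simp add: field_simps)
        also have "1 / (2 * R) \<le> 1/10" using R5 by (simp add: field_simps)
        finally show ?thesis by simp
      qed
      have t2: "R * (2 * pi * (2 * real B / real N)) < 16/5 * sB"
      proof -
        have "R * (2 * pi * (2 * real B / real N)) = 4 * pi * R * real B / real N" by simp
        also have "\<dots> \<le> 4 * pi * R * real B / (5 * sB * R)"
          using NR Rpos sB1 B \<open>real N \<ge> 1\<close> by (intro divide_left_mono) (auto simp: zero_less_mult_iff)
        also have "\<dots> = 4 * pi * sB / 5" using Rpos sB1 by (simp add: sBsq[symmetric] field_simps)
        also have "\<dots> < 4 * 4 * sB / 5" using pi_less_4 sB1 by (intro divide_strict_right_mono mult_strict_right_mono) auto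
        finally show ?thesis by simp
      qed
      show ?thesis using t1 t2 sB1 by linarith
    qed
    finally have "z \<in> ball x (6 * sqrt (real B))" by (simp add: sB_def)
    thus ?thesis using zX by blast
  qed
qed

theorem theorem3:
  fixes \<alpha> :: real
  assumes "0 \<le> \<alpha>" and "\<alpha> < 1"
  shows "(\<forall>B::nat. B > 0 \<longrightarrow> badly_approx \<alpha> \<longrightarrow> pq_bounded \<alpha> B \<longrightarrow>
            rel_dense (6 * sqrt (real B)) (Xsqrt \<alpha>))
       \<and> (\<forall>r::real. r > 0 \<longrightarrow> rel_dense r (Xsqrt \<alpha>) \<longrightarrow>
            badly_approx \<alpha> \<and> pq_bounded \<alpha> (nat \<lfloor>96 * r\<^sup>2\<rfloor>))
       \<and> (\<forall>C::real. C > 0 \<longrightarrow> badly_approx_const \<alpha> C \<longrightarrow>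
            unif_discrete (sqrt C / 2) (Xsqrt \<alpha>))
       \<and> (\<forall>s::real. s > 0 \<longrightarrow> unif_discrete s (Xsqrt \<alpha>) \<longrightarrow>
            badly_approx_const \<alpha> (s\<^sup>2 / 53))"
  using part_a[OF assms] part_b[OF assms] part_c part_d by blast

end
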